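(* Let $p \geq 3$ be a prime and $x, y \in \mathbb{Z}$ with $x^2 - 2 = y^p$ and $y \neq -1$. Then: (1) every prime factor of $\frac{y^p-1}{y-1}$ is $\equiv \pm 1 \pmod{12}$; (2) every prime factor of $\frac{y^p-1}{y-1}$ is $p$ or $\equiv 1 \pmod p$; either $p \nmid (y-1)$ and $\frac{y^p-1}{y-1} \equiv 1 \pmod p$, or $p \mid (y-1)$ and $\frac{y^p-1}{y-1} \equiv p \pmod{p^2}$, and the latter case cannot happen unless $p \equiv \pm 1 \pmod{12}$; (3) $\frac{y^p-1}{y-1} \equiv 1 \pmod{24}$; (4) if $p \equiv 2 \pmod 3$ or $p = 3$, then $3 \nmid x$. *)

theory Defs
  imports "HOL-Number_Theory.Number_Theory"
begin

end

theory Submission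
  imports Defs
begin


lemma fermat_int:
  assumes "prime (q::nat)" "\<not> int q dvd y"
  shows "[y^(q-1) = 1] (mod int q)"
proof -
  define a where "a = nat (y mod int q)"
  have q0: "q > 0" using assms(1) prime_gt_0_nat by blast
  have ia: "int a = y mod int q" unfolding a_def using q0 by simp
  have "\<not> q dvd a"
  proof
    assume "q dvd a"
    then have "int q dvd int a" by simp
    then have "int q dvd y mod int q" using ia by simp
    then show False using assms(2) by (simp add: dvd_mod_iff)
  qed
  then have "[a^(q-1) = 1] (mod q)" using fermat_theorem assms(1) by blast
  then have "[int a^(q-1) = 1] (mod int q)" by (metis cong_int_iff of_nat_1 of_nat_power)
  moreover have "[int a = y] (mod int q)" using ia by (simp add: cong_def)
  ultimately show ?thesis by (meson cong_pow cong_sym cong_trans)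
qed

lemma fermat_int2:
  assumes "prime (q::nat)"
  shows "[y^q = y] (mod int q)"
proof (cases "int q dvd y")
  case True
  have q0: "q > 0" using assms(1) prime_gt_0_nat by blast
  then have "int q dvd y^q" using True by (metis dvd_power dvd_trans)
  then show ?thesis using True by (simp add: cong_def dvd_eq_mod_eq_0)
next
  case False
  have q0: "q > 0" using assms(1) prime_gt_0_nat by blast
  have "y^q = y * y^(q-1)" using q0 by (metis Suc_diff_1 power_Suc)
  moreover have "[y * y^(q-1) = y * 1] (mod int q)" using fermat_int[OF assms False] by (rule cong_scalar_left)
  ultimately show ?thesis by simp
qed

lemma geom: "(y::int) \<noteq> 1 \<Longrightarrow> (y^p - 1) div (y - 1) = (\<Sum>i<p. y^i)"
  using power_diff_1_eq[of y p] by simp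

lemma sum_cong1: "[(y::int) = 1] (mod m) \<Longrightarrow> [(\<Sum>i<n. y^i) = int n] (mod m)"
proof -
  assume h: "[(y::int) = 1] (mod m)"
  have "[(\<Sum>i<n. y^i) = (\<Sum>i<n. 1)] (mod m)"
    by (rule cong_sum) (metis h cong_pow power_one)
  then show ?thesis by simp
qed

lemma alt_sum: "(\<Sum>i<2*k+1. (-1::int)^i) = 1"
  by (induction k) (auto simp: numeral_2_eq_2)

lemma sum_congm1: "[(y::int) = -1] (mod m) \<Longrightarrow> odd n \<Longrightarrow> [(\<Sum>i<n. y^i) = 1] (mod m)"
proof -
  assume h: "[(y::int) = -1] (mod m)" "odd n"
  have "[(\<Sum>i<n. y^i) = (\<Sum>i<n. (-1)^i)] (mod m)"
    by (rule cong_sum) (metis h(1) cong_pow)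
  moreover obtain k where "n = 2*k+1" using h(2) oddE by blast
  ultimately show ?thesis using alt_sum by simp
qed

lemma pow_lin: "[(1 + a::int)^n = 1 + int n * a] (mod a^2)"
proof (induction n)
  case 0 then show ?case by simp
next
  case (Suc n)
  have "[(1+a)^Suc n = (1 + a) * (1 + int n * a)] (mod a^2)"
    using Suc by (simp add: cong_scalar_left)
  moreover have "(1 + a) * (1 + int n * a) = (1 + int (Suc n) * a) + int n * a^2"
    by (simp add: algebra_simps power2_eq_square)
  moreover have "[(1 + int (Suc n) * a) + int n * a^2 = 1 + int (Suc n) * a] (mod a^2)"
    by (simp add: cong_def)
  ultimately show ?case using cong_trans by metis
qed

lemma sum_lin: "[(\<Sum>i<n. (1 + a::int)^i) = int n + a * (\<Sum>i<n. int i)] (mod a^2)"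
proof -
  have "[(\<Sum>i<n. (1 + a::int)^i) = (\<Sum>i<n. 1 + int i * a)] (mod a^2)"
    by (rule cong_sum) (rule pow_lin)
  moreover have "(\<Sum>i<n. 1 + int i * a) = int n + a * (\<Sum>i<n. int i)"
    by (simp add: sum.distrib sum_distrib_left algebra_simps)
  ultimately show ?thesis by simp
qed

lemma gauss2: "2 * (\<Sum>i<n. int i) = int n * (int n - 1)"
  by (induction n) (auto simp: algebra_simps)

lemma fact_nat:
  "n > 0 \<Longrightarrow> (\<forall>q. prime q \<and> q dvd n \<longrightarrow> q mod 12 = 1 \<or> q mod 12 = 11) \<Longrightarrow>
   n mod 24 \<in> {1,11,13,23::nat}"
proof (induction n rule: nat_less_induct)
  case (1 n)
  show ?case
  proof (cases "n = 1")
    case True then show ?thesis by simp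
  next
    case False
    then obtain q where q: "prime q" "q dvd n" using prime_factor_nat by blast
    then obtain m where m: "n = q * m" by blast
    have "m > 0" using m 1(2) by auto
    have "q > 1" using q prime_gt_1_nat by blast
    then have "m < n" using m `m > 0` by simp
    have "m mod 24 \<in> {1,11,13,23}"
      using 1(1) `m < n` `m > 0` 1(3) m by (meson dvd_mult_right dvd_trans dvd_triv_right)
    moreover have "q mod 24 \<in> {1,11,13,23}"
    proof -
      have "q mod 12 = 1 \<or> q mod 12 = 11" using 1(3) q by blast
      then show ?thesis by (simp add: mod_mod_cancel[symmetric]) presburger
    qed
    moreover have "n mod 24 = ((q mod 24) * (m mod 24)) mod 24" using m by (simp add: mod_mult_eq)
    ultimately show ?thesis by auto
  qed
qed



lemma s1: "q mod 4 = (1::int) \<Longrightarrow> (-1::int)^nat((q-1) div 2) = 1"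
proof -
  assume h: "q mod 4 = 1"
  have "(q-1) div 2 = 2*((q-1) div 4)" using h by presburger
  then have "nat((q-1) div 2) = 2 * nat ((q-1) div 4)" by (simp add: nat_mult_distrib)
  then show ?thesis by (simp add: power_mult)
qed
lemma s3: "q mod 4 = (3::int) \<Longrightarrow> q > 0 \<Longrightarrow> (-1::int)^nat((q-1) div 2) = -1"
proof -
  assume h: "q mod 4 = 3" "q > 0"
  have "(q-1) div 2 = 2*((q-1) div 4) + 1" using h by presburger
  moreover have "(q-1) div 4 \<ge> 0" using h by simp
  ultimately have "nat((q-1) div 2) = 2 * nat ((q-1) div 4) + 1" by (simp add: nat_mult_distrib nat_add_distrib)
  then show ?thesis by (simp add: power_mult)
qed
lemma pr3: "prime (3::int)" by (simp add: prime_iff)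
lemma p3: "prime (q::int) \<Longrightarrow> 3 dvd q \<Longrightarrow> q = 3"
  using primes_dvd_imp_eq[OF pr3] by blast
lemma cube9: "(y::int)^3 mod 9 \<in> {0,1,8}"
proof -
  have "y^3 mod 9 = (y mod 9)^3 mod 9" by (simp add: power_mod)
  moreover have "y mod 9 = 0 \<or> y mod 9 = 1 \<or> y mod 9 = 2 \<or> y mod 9 = 3 \<or> y mod 9 = 4 \<or> y mod 9 = 5 \<or> y mod 9 = 6 \<or> y mod 9 = 7 \<or> y mod 9 = 8" by presburger
  ultimately show ?thesis by (elim disjE) auto
qed

lemma no3: assumes "(3::int) dvd x" "x^2 - 2 = y^3" shows False
proof -
  obtain k where "x = 3*k" using assms(1) by blast
  then have "y^3 = 9*k^2 - 2" using assms(2) by (simp add: power2_eq_square)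
  moreover have "(9*m - 2) mod 9 = (7::int)" for m by presburger
  ultimately have "y^3 mod 9 = 7" by simp
  then show False using cube9[of y] by simp
qed

lemma sq8: "odd (x::int) \<Longrightarrow> x^2 mod 8 = 1"
proof -
  assume o: "odd x"
  have "x^2 mod 8 = (x mod 8)^2 mod 8" by (simp add: power_mod)
  moreover have "x mod 8 = 1 \<or> x mod 8 = 3 \<or> x mod 8 = 5 \<or> x mod 8 = 7" using o by presburger
  ultimately show ?thesis by (elim disjE) auto
qed

lemma sq3: "(x::int)^2 mod 3 \<in> {0,1}"
proof -
  have "x^2 mod 3 = (x mod 3)^2 mod 3" by (simp add: power_mod)
  moreover have "x mod 3 = 0 \<or> x mod 3 = 1 \<or> x mod 3 = 2" by presburger
  ultimately show ?thesis by (elim disjE) auto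
qed

lemma prime_int_of_nat: "prime (p::nat) \<Longrightarrow> prime (int p)" by simp

lemma leg_q3: assumes "prime (q::int)" "q > 3" shows "Legendre q 3 = (if q mod 3 = 1 then 1 else -1)"
proof -
  have nd: "\<not> [q = 0] (mod 3)"
  proof
    assume "[q = 0] (mod 3)"
    then have "3 dvd q" by (simp add: cong_0_iff)
    then have "q = 3" using p3 assms(1) by blast
    then show False using assms(2) by simp
  qed
  show ?thesis
  proof (cases "q mod 3 = 1")
    case True
    then have "[1^2 = q] (mod 3)" by (simp add: cong_def)
    then have "QuadRes 3 q" unfolding QuadRes_def by blast
    then show ?thesis using True nd unfolding Legendre_def by simp
  next
    case False
    have q2: "q mod 3 = 2" using nd False unfolding cong_def by presburger
    have "\<not> QuadRes 3 q"
    proof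
      assume "QuadRes 3 q"
      then obtain z where "[z^2 = q] (mod 3)" unfolding QuadRes_def by blast
      then have "z^2 mod 3 = 2" using q2 by (simp add: cong_def)
      then show False using sq3[of z] by simp
    qed
    then show ?thesis using False nd unfolding Legendre_def by simp
  qed
qed

lemma q_mod12: assumes "prime (q::int)" "q > 3" "QuadRes q 3"
  shows "q mod 12 = 1 \<or> q mod 12 = 11"
proof -
  have nd: "\<not> [3 = 0] (mod q)"
  proof
    assume "[3 = 0] (mod q)"
    then have "q dvd 3" by (simp add: cong_0_iff)
    then show False using assms(2) by (simp add: zdvd_not_zless)
  qed
  have L3: "Legendre 3 q = 1" using assms(3) nd unfolding Legendre_def by simp
  have pq: "prime (nat q)" using prime_nat_iff_prime[of "nat q"] prime_ge_0_int[of q] assms(1) by simp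
  have pn3: "prime (nat 3)" by (simp add: prime_iff)
  have R: "Legendre 3 q * Legendre q 3 = (-1::int) ^ (nat ((3 - 1) div 2 * ((q - 1) div 2)))"
    by (rule Quadratic_Reciprocity_int) (use assms pq pn3 in auto)
  have oq: "odd q" using prime_odd_int[of q] assms by simp
  then have "q mod 4 = 1 \<or> q mod 4 = 3" by presburger
  then show ?thesis
  proof
    assume h: "q mod 4 = 1"
    then have "Legendre q 3 = 1" using R L3 s1 by simp
    then have "q mod 3 = 1" using leg_q3[OF assms(1,2)] by (auto split: if_splits)
    then show ?thesis using h by presburger
  next
    assume h: "q mod 4 = 3"
    then have "Legendre q 3 = -1" using R L3 s3[of q] assms(2) by simp
    then have "q mod 3 \<noteq> 1" using leg_q3[OF assms(1,2)] by (auto split: if_splits)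
    moreover have "\<not> 3 dvd q"
    proof
      assume "3 dvd q" then have "q = 3" using p3 assms(1) by blast
      then show False using assms(2) by simp
    qed
    ultimately show ?thesis using h by presburger
  qed
qed



lemma dvd_pos_pow: "(a::int) dvd y \<Longrightarrow> p > 0 \<Longrightarrow> a dvd y^p"
  by (metis dvd_power dvd_trans)

theorem theorem2p8:
  fixes p :: nat and x y :: int
  assumes "prime p" and "p \<ge> 3"
    and "x^2 - 2 = y^p" and "y \<noteq> -1"
  shows "(\<forall>q::int. prime q \<and> q dvd ((y^p - 1) div (y - 1)) \<longrightarrow>
            [q = 1] (mod 12) \<or> [q = -1] (mod 12))
    \<and> (\<forall>q::int. prime q \<and> q dvd ((y^p - 1) div (y - 1)) \<longrightarrow>
            q = int p \<or> [q = 1] (mod (int p)))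
    \<and> ((\<not> int p dvd (y - 1) \<and> [(y^p - 1) div (y - 1) = 1] (mod (int p)))
       \<or> (int p dvd (y - 1) \<and> [(y^p - 1) div (y - 1) = int p] (mod (int p ^ 2))))
    \<and> (int p dvd (y - 1) \<longrightarrow> [int p = 1] (mod 12) \<or> [int p = -1] (mod 12))
    \<and> [(y^p - 1) div (y - 1) = 1] (mod 24)
    \<and> ((p mod 3 = 2 \<or> p = 3) \<longrightarrow> \<not> (3::int) dvd x)"
proof -
  have pp: "prime p" and p3: "p \<ge> 3" and eq: "x^2 - 2 = y^p" using assms by auto
  have op: "odd p" using prime_odd_nat[OF pp] p3 by simp
  then obtain k where pk: "p = 2*k+1" using oddE by blast
  have pip: "prime (int p)" using pp by simp
  have ox: "odd x"
  proof
    assume "even x"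
    then obtain a where a: "x = 2*a" by blast
    then have e: "y^p = 4*a^2 - 2" using eq by (simp add: power2_eq_square)
    then have "even (y^p)" by presburger
    then have "even y" using p3 by simp
    then obtain b where "y = 2*b" by blast
    then have yb: "y^2 = 4*b^2" by (simp add: power2_eq_square)
    have "p = 2 + (p-2)" using p3 by simp
    then have "y^p = y^2 * y^(p-2)" by (metis power_add)
    then have "y^p = 4 * (b^2 * y^(p-2))" using yb by simp
    then have "(4::int) dvd 4*a^2 - 2" using e by (metis dvd_triv_left)
    moreover have "\<not> (4::int) dvd 4*m - 2" for m by presburger
    ultimately show False by blast
  qed
  have x8: "x^2 mod 8 = 1" using sq8[OF ox] .
  have yp8: "y^p mod 8 = 7"
  proof -
    have "y^p = x^2 - 2" using eq by simp
    moreover have "(m - 2) mod 8 = 7" if "m mod 8 = 1" for m :: int using that by presburger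
    ultimately show ?thesis using x8 by simp
  qed
  have oy: "odd y"
  proof
    assume "even y"
    then have "even (y^p)" using p3 by simp
    moreover have "\<And>m::int. even m \<Longrightarrow> m mod 8 \<noteq> 7" by presburger
    ultimately show False using yp8 by blast
  qed
  have y28: "y^2 mod 8 = 1" using sq8[OF oy] .
  have "y^p = y * (y^2)^k" unfolding pk by (metis power_Suc power_mult Suc_eq_plus1)
  then have "[y^p = y * (y^2)^k] (mod 8)" by simp
  moreover have "[y * (y^2)^k = y * 1^k] (mod 8)"
    by (rule cong_scalar_left, rule cong_pow) (simp add: cong_def y28)
  ultimately have "[y^p = y] (mod 8)" using cong_trans by fastforce
  then have y8: "y mod 8 = 7" using yp8 by (simp add: cong_def)
  then have ym1: "[y = -1] (mod 8)" by (simp add: cong_def)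
  have y1: "y \<noteq> 1" using y8 by auto
  define S where "S = (\<Sum>i<p. y^i)"
  have Sdef: "(y^p - 1) div (y - 1) = S" unfolding S_def using geom[OF y1] .
  have key: "y^p - 1 = (y - 1) * S" unfolding S_def by (rule power_diff_1_eq)
  have S8: "[S = 1] (mod 8)" unfolding S_def using sum_congm1[OF ym1 op] .
  have Sodd: "odd S" using S8 unfolding cong_def by presburger
  have Sdvd: "q dvd S \<Longrightarrow> q dvd y^p - 1" for q using key by simp
  have Q2: "q = int p \<or> [q = 1] (mod (int p))" if q: "prime q" "q dvd S" for q
  proof (cases "q dvd y - 1")
    case True
    then have "[y = 1] (mod q)" by (simp add: cong_iff_dvd_diff)
    then have "[S = int p] (mod q)" unfolding S_def by (rule sum_cong1)
    then have "q dvd int p" using q(2) by (simp add: cong_dvd_iff)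
    then have "q = int p" using primes_dvd_imp_eq[OF q(1) pip] by simp
    then show ?thesis by simp
  next
    case False
    define n where "n = nat q"
    have qn: "int n = q" unfolding n_def using prime_ge_0_int[OF q(1)] by simp
    have pn: "prime n" using q(1) unfolding qn[symmetric] by simp
    have qy: "\<not> q dvd y"
    proof
      assume "q dvd y"
      then have "q dvd y^p" using p3 dvd_pos_pow[of q y p] by simp
      moreover have "q dvd y^p - 1" using Sdvd q(2) .
      ultimately have "q dvd y^p - (y^p - 1)" by (rule dvd_diff)
      then have "q dvd 1" by simp
      then show False using q(1) not_prime_unit by blast
    qed
    have F: "[y^(n-1) = 1] (mod q)" using fermat_int[OF pn] qy qn by simp
    have Y: "[y^p = 1] (mod q)" using Sdvd[OF q(2)] by (simp add: cong_iff_dvd_diff)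
    have "p dvd n - 1"
    proof (rule ccontr)
      assume nd: "\<not> p dvd n - 1"
      have "coprime p (n - 1)" using nd pp by (simp add: prime_imp_coprime)
      then have g: "gcd p (n-1) = 1" by simp
      obtain a b where ab: "p * a = (n-1) * b + 1" using bezout_nat[of p "n-1"] g p3 by auto
      have "[y^(p*a) = 1] (mod q)" using Y by (metis cong_pow power_mult power_one)
      moreover have "[y^((n-1)*b+1) = y] (mod q)"
      proof -
        have "[(y^(n-1))^b * y = 1^b * y] (mod q)" using F by (intro cong_mult cong_pow) auto
        then have c: "[(y^(n-1))^b * y = y] (mod q)" by simp
        have e: "y^((n-1)*b+1) = (y^(n-1))^b * y" by (metis power_mult power_add power_one_right)
        show ?thesis unfolding e using c .
      qed
      ultimately have "[y = 1] (mod q)" using ab by (metis cong_sym cong_trans)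
      then show False using False by (simp add: cong_iff_dvd_diff)
    qed
    moreover have "n \<ge> 1" using pn prime_ge_1_nat by blast
    ultimately have "int p dvd q - 1" using qn by (metis int_dvd_int_iff of_nat_1 of_nat_diff)
    then show ?thesis by (simp add: cong_iff_dvd_diff)
  qed
  have Q1: "q mod 12 = 1 \<or> q mod 12 = 11" if q: "prime q" "q dvd S" for q
  proof -
    have q2: "q \<ge> 2" using prime_ge_2_int q(1) by blast
    have "q \<noteq> 2" using q(2) Sodd by auto
    moreover have "q \<noteq> 3"
    proof
      assume q3: "q = 3"
      have "int p = 3"
      proof (rule ccontr)
        assume "int p \<noteq> 3"
        then have "[3 = 1] (mod int p)" using Q2[OF q] q3 by simp
        then have "int p dvd 2" by (simp add: cong_iff_dvd_diff)
        then show False using p3 by (simp add: zdvd_not_zless)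
      qed
      then have pe: "p = 3" by simp
      have "3 dvd x^2 - 3" using Sdvd[OF q(2)] eq q3 by (metis diff_diff_eq numeral_plus_one semiring_norm(5))
      then have "3 dvd x^2" by (metis dvd_diff dvd_refl diff_add_cancel dvd_add)
      then have "3 dvd x" using pr3 prime_dvd_power by blast
      then show False using no3 eq pe by simp
    qed
    ultimately have q5: "q > 3" using q2 by simp
    have "[x^2 = 3] (mod q)"
    proof -
      have "q dvd y^p - 1" using Sdvd[OF q(2)] .
      then have "q dvd x^2 - 3" using eq by (simp add: algebra_simps)
      then show ?thesis by (simp add: cong_iff_dvd_diff)
    qed
    then have "QuadRes q 3" unfolding QuadRes_def by blast
    then show ?thesis using q_mod12[OF q(1) q5] by blast
  qed
  have P3: "(\<not> int p dvd (y - 1) \<and> [S = 1] (mod (int p)))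
       \<or> (int p dvd (y - 1) \<and> [S = int p] (mod (int p ^ 2)))"
  proof (cases "int p dvd y - 1")
    case False
    have "[y^p = y] (mod int p)" using fermat_int2[OF pp] .
    then have "int p dvd (y^p - 1) - (y - 1)" by (simp add: cong_iff_dvd_diff)
    then have "int p dvd (y - 1) * (S - 1)" using key by (simp add: algebra_simps)
    then have "int p dvd S - 1" using False pip prime_dvd_mult_iff by blast
    then show ?thesis using False by (simp add: cong_iff_dvd_diff)
  next
    case True
    then obtain t where t: "y - 1 = int p * t" by blast
    have yt: "y = 1 + int p * t" using t by simp
    have c: "[S = int p + (int p * t) * (\<Sum>i<p. int i)] (mod (int p * t)^2)"
      unfolding S_def yt by (rule sum_lin)
    have "int p ^ 2 dvd (int p * t)^2" by (simp add: power_mult_distrib)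
    then have c2: "[S = int p + (int p * t) * (\<Sum>i<p. int i)] (mod int p ^ 2)"
      using c cong_dvd_modulus by blast
    have "2 * (\<Sum>i<p. int i) = int p * (2 * int k)" using gauss2[of p] pk by simp
    then have "(\<Sum>i<p. int i) = int p * int k" by simp
    then have E: "(int p * t) * (\<Sum>i<p. int i) = int p ^ 2 * (t * int k)" by (simp add: power2_eq_square algebra_simps)
    have "[int p + int p ^ 2 * (t * int k) = int p] (mod int p ^ 2)" unfolding cong_def by simp
    then have "[int p + (int p * t) * (\<Sum>i<p. int i) = int p] (mod int p ^ 2)" unfolding E .
    then show ?thesis using True c2 cong_trans by blast
  qed
  have P4: "int p dvd (y - 1) \<longrightarrow> [int p = 1] (mod 12) \<or> [int p = -1] (mod 12)"
  proof
    assume "int p dvd y - 1"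
    then have "[S = int p] (mod (int p ^ 2))" using P3 by blast
    moreover have "int p dvd int p ^ 2" by (simp add: power2_eq_square)
    ultimately have "[S = int p] (mod int p)" by (rule cong_dvd_modulus)
    then have "int p dvd S" by (simp add: cong_dvd_iff)
    then have "int p mod 12 = 1 \<or> int p mod 12 = 11" using Q1 pip by blast
    then show "[int p = 1] (mod 12) \<or> [int p = -1] (mod 12)" by (auto simp: cong_def)
  qed
  have S0: "S \<noteq> 0" using Sodd by auto
  have "nat \<bar>S\<bar> mod 24 \<in> {1,11,13,23}"
  proof (rule fact_nat)
    show "nat \<bar>S\<bar> > 0" using S0 by simp
    show "\<forall>q. prime q \<and> q dvd nat \<bar>S\<bar> \<longrightarrow> q mod 12 = 1 \<or> q mod 12 = 11"
    proof (intro allI impI)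
      fix q :: nat assume h: "prime q \<and> q dvd nat \<bar>S\<bar>"
      then have "int q dvd int (nat \<bar>S\<bar>)" using int_dvd_int_iff by blast
      then have "int q dvd \<bar>S\<bar>" by simp
      then have "int q dvd S" by simp
      then have "int q mod 12 = 1 \<or> int q mod 12 = 11" using Q1 h by simp
      then show "q mod 12 = 1 \<or> q mod 12 = 11" by presburger
    qed
  qed
  moreover have "int (nat \<bar>S\<bar> mod 24) = \<bar>S\<bar> mod 24" by (simp add: zmod_int)
  ultimately have A: "\<bar>S\<bar> mod 24 = 1 \<or> \<bar>S\<bar> mod 24 = 11 \<or> \<bar>S\<bar> mod 24 = 13 \<or> \<bar>S\<bar> mod 24 = 23" by auto
  have B: "S mod 24 = 1 \<or> S mod 24 = 11 \<or> S mod 24 = 13 \<or> S mod 24 = 23"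
  proof (cases "S \<ge> 0")
    case True then show ?thesis using A by simp
  next
    case False
    then have "\<bar>S\<bar> = - S" by simp
    then have "(-S) mod 24 = 1 \<or> (-S) mod 24 = 11 \<or> (-S) mod 24 = 13 \<or> (-S) mod 24 = 23" using A by simp
    then show ?thesis by presburger
  qed
  have "S mod 8 = 1" using S8 unfolding cong_def by simp
  then have S24: "S mod 24 = 1" using B by presburger
  have P6: "(p mod 3 = 2 \<or> p = 3) \<longrightarrow> \<not> (3::int) dvd x"
  proof (intro impI notI)
    assume h: "p mod 3 = 2 \<or> p = 3" and x3: "3 dvd x"
    show False
    proof (cases "p = 3")
      case True then show False using no3 x3 eq by simp
    next
      case False
      then have pm: "p mod 3 = 2" using h by simp
      obtain c where "x = 3*c" using x3 by blast
      then have "y^p = 9*c^2 - 2" using eq by (simp add: power2_eq_square)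
      moreover have "(9*m - 2) mod 3 = (1::int)" for m by presburger
      ultimately have yp3: "y^p mod 3 = 1" by simp
      have "y mod 3 = 1"
      proof -
        have "y mod 3 = 0 \<or> y mod 3 = 1 \<or> y mod 3 = 2" by presburger
        moreover have "y mod 3 \<noteq> 0"
        proof
          assume "y mod 3 = 0"
          then have "3 dvd y" by presburger
          then have "3 dvd y^p" using p3 dvd_pos_pow[of 3 y p] by simp
          then show False using yp3 by presburger
        qed
        moreover have "y mod 3 \<noteq> 2"
        proof
          assume "y mod 3 = 2"
          then have "[y = -1] (mod 3)" by (simp add: cong_def)
          then have "[y^p = (-1)^p] (mod 3)" by (rule cong_pow)
          then have "[y^p = -1] (mod 3)" using op by simp
          then show False using yp3 by (simp add: cong_def)
        qed
        ultimately show ?thesis by blast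
      qed
      then have "[y = 1] (mod 3)" by (simp add: cong_def)
      then have "[S = int p] (mod 3)" unfolding S_def by (rule sum_cong1)
      then have "S mod 3 = 2" using pm by (simp add: cong_def) presburger
      then show False using S24 by presburger
    qed
  qed
  show ?thesis unfolding Sdef
    using Q1 Q2 P3 P4 S24 P6 by (auto simp: cong_def)
qed

end
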